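(* Let $X=\mathrm{Bl}_{x_0}\mathbb{P}^2$ with hyperplane class $H$ and exceptional divisor $E$, $b>1$, $\beta=b[H]-[E]$, $p\in\mathbb{R}$, and for $s<pb$ let $\tilde\alpha_s=p[H]-s[E]$ and $\tilde c_s=\frac{p^2-s^2-b^2+1}{2(pb-s)}=\frac{\tilde\alpha_s^2-\beta^2}{2\tilde\alpha_s\cdot\beta}$. Then $$\tilde c_s<\min\Big(\frac pb,\ \frac{p-s}{b-1},\ bp\Big).$$ In particular: (1) $\tilde\alpha_s-\tilde c_s\beta$ is a big class, and it is Kähler (resp. nef) if and only if $s>\tilde c_s$ (resp. $s\ge\tilde c_s$); (2) $(X,\tilde\alpha_s,\beta)$ is dHYM-stable (resp. semi-stable) if and only if $s>\tilde c_s$ (resp. $s\ge\tilde c_s$).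
   Context: For a class $\alpha$ with $\alpha\cdot\beta\neq0$ the dHYM angle satisfies $\cot\vartheta=\frac{\alpha^2-\beta^2}{2\alpha\cdot\beta}$. $(X,\alpha,\beta)$ is dHYM-stable if for every Kähler class $\gamma$ and $k=1,2$, $\mathrm{Re}(\alpha+\sqrt{-1}\beta)^k\cdot\gamma^{2-k}\ge\cot\vartheta\,\mathrm{Im}(\alpha+\sqrt{-1}\beta)^k\cdot\gamma^{2-k}$, and for every curve $Z$, $\mathrm{Re}(\alpha+\sqrt{-1}\beta)\cdot Z>\cot\vartheta\,\mathrm{Im}(\alpha+\sqrt{-1}\beta)\cdot Z$; dHYM-semi-stable is the same with all inequalities non-strict. *)

theory Defs
  imports "HOL-Analysis.Product_Vector"
begin

text \<open>Model of the real Neron--Severi space H^{1,1}(X,R) of X = Bl_{x0} P^2.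
  It is 2-dimensional with basis [H], [E]; a class is the pair (a, e)
  standing for a[H] + e[E].  Intersection form: H.H = 1, E.E = -1, H.E = 0.\<close>

type_synonym cls = "real \<times> real"

definition clsH :: cls where "clsH = (1, 0)"
definition clsE :: cls where "clsE = (0, 1)"

definition inter :: "cls \<Rightarrow> cls \<Rightarrow> real" where
  "inter x y = fst x * fst y - snd x * snd y"

definition kahler :: "cls \<Rightarrow> bool" where
  "kahler g \<longleftrightarrow> fst g > - snd g \<and> - snd g > 0"

definition nef :: "cls \<Rightarrow> bool" where
  "nef g \<longleftrightarrow> fst g \<ge> - snd g \<and> - snd g \<ge> 0"

text \<open>Big cone: interior of the pseudo-effective cone, which is spanned by
  [E] and [H]-[E]; i.e. x[H] - y[E] with x > 0 and x > y.\<close>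
definition big :: "cls \<Rightarrow> bool" where
  "big g \<longleftrightarrow> fst g > 0 \<and> fst g > - snd g"

text \<open>Classes of irreducible curves on Bl_{x0} P^2: the exceptional curve E, and
  strict transforms of irreducible plane curves of degree d \<ge> 1 with multiplicity
  m at x0 (0 \<le> m \<le> d-1, or the lines through x0: d = m = 1), of class d[H] - m[E].\<close>
definition curve_class :: "cls \<Rightarrow> bool" where
  "curve_class z \<longleftrightarrow> z = clsE \<or>
     (\<exists>d m :: nat. d \<ge> 1 \<and> (m < d \<or> (d = 1 \<and> m = 1)) \<and>
        z = (real d, - real m))"

definition dhym_cot :: "cls \<Rightarrow> cls \<Rightarrow> real" where
  "dhym_cot \<alpha> \<beta> = (inter \<alpha> \<alpha> - inter \<beta> \<beta>) / (2 * inter \<alpha> \<beta>)"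

text \<open>On a surface: Re(alpha + i beta).gamma = alpha.gamma, Im = beta.gamma (k = 1);
  Re(alpha + i beta)^2 = alpha^2 - beta^2, Im = 2 alpha.beta (k = 2, gamma^0 = 1).\<close>
definition dhym_stable :: "cls \<Rightarrow> cls \<Rightarrow> bool" where
  "dhym_stable \<alpha> \<beta> \<longleftrightarrow> inter \<alpha> \<beta> \<noteq> 0 \<and>
     (\<forall>\<gamma>. kahler \<gamma> \<longrightarrow>
        inter \<alpha> \<gamma> \<ge> dhym_cot \<alpha> \<beta> * inter \<beta> \<gamma> \<and>
        inter \<alpha> \<alpha> - inter \<beta> \<beta> \<ge> dhym_cot \<alpha> \<beta> * (2 * inter \<alpha> \<beta>)) \<and>
     (\<forall>Z. curve_class Z \<longrightarrow> inter \<alpha> Z > dhym_cot \<alpha> \<beta> * inter \<beta> Z)"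

definition dhym_semistable :: "cls \<Rightarrow> cls \<Rightarrow> bool" where
  "dhym_semistable \<alpha> \<beta> \<longleftrightarrow> inter \<alpha> \<beta> \<noteq> 0 \<and>
     (\<forall>\<gamma>. kahler \<gamma> \<longrightarrow>
        inter \<alpha> \<gamma> \<ge> dhym_cot \<alpha> \<beta> * inter \<beta> \<gamma> \<and>
        inter \<alpha> \<alpha> - inter \<beta> \<beta> \<ge> dhym_cot \<alpha> \<beta> * (2 * inter \<alpha> \<beta>)) \<and>
     (\<forall>Z. curve_class Z \<longrightarrow> inter \<alpha> Z \<ge> dhym_cot \<alpha> \<beta> * inter \<beta> Z)"

end

theory Submission
  imports Defs
begin

theorem lemma4p4:
  fixes b p s :: real
  assumes "b > 1" and "s < p * b"
  defines "\<beta> \<equiv> b *\<^sub>R clsH - clsE"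
      and "\<alpha> \<equiv> p *\<^sub>R clsH - s *\<^sub>R clsE"
      and "c \<equiv> (p\<^sup>2 - s\<^sup>2 - b\<^sup>2 + 1) / (2 * (p * b - s))"
  shows "c = (inter \<alpha> \<alpha> - inter \<beta> \<beta>) / (2 * inter \<alpha> \<beta>)
    \<and> c < min (p / b) (min ((p - s) / (b - 1)) (b * p))
    \<and> big (\<alpha> - c *\<^sub>R \<beta>)
    \<and> (kahler (\<alpha> - c *\<^sub>R \<beta>) \<longleftrightarrow> s > c)
    \<and> (nef (\<alpha> - c *\<^sub>R \<beta>) \<longleftrightarrow> s \<ge> c)
    \<and> (dhym_stable \<alpha> \<beta> \<longleftrightarrow> s > c)
    \<and> (dhym_semistable \<alpha> \<beta> \<longleftrightarrow> s \<ge> c)"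
proof -
  have b0: "b > 0" using assms(1) by simp
  define d where "d = p * b - s"
  have d0: "d > 0" using assms(2) d_def by simp
  have ab: "\<alpha> = (p, - s)" "\<beta> = (b, -1)"
    by (simp_all add: \<alpha>_def \<beta>_def clsH_def clsE_def)
  have iab: "inter \<alpha> \<beta> = d" "inter \<alpha> \<alpha> = p^2 - s^2" "inter \<beta> \<beta> = b^2 - 1"
    by (simp_all add: ab inter_def d_def power2_eq_square)
  have cd: "c * (2 * d) = p^2 - s^2 - b^2 + 1"
    using d0 by (simp add: c_def d_def[symmetric])
  have e1: "c = (inter \<alpha> \<alpha> - inter \<beta> \<beta>) / (2 * inter \<alpha> \<beta>)"
    by (simp add: iab c_def d_def)
  have "c * (2*d) * b < p * (2*d)"
  proof -
    have "0 \<le> b * (p - s/b)^2" using b0 by simp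
    moreover have "0 \<le> s^2 * (b - 1/b)"
    proof -
      have "1/b \<le> b" using assms(1) b0 by (simp add: field_simps) (smt (verit) mult_le_cancel_right1)
      thus ?thesis by simp
    qed
    moreover have "b^3 - b > 0" using assms(1)
      by (smt (verit) b0 mult_less_cancel_left1 power3_eq_cube)
    moreover have "b * (p - s/b)^2 + s^2 * (b - 1/b) = b*p^2 - 2*p*s + b*s^2"
      using b0 by (simp add: field_simps power2_eq_square)
    ultimately have "0 < b*p^2 + b*s^2 - 2*p*s + b^3 - b" by linarith
    thus ?thesis unfolding cd by (simp add: d_def algebra_simps power2_eq_square power3_eq_cube)
  qed
  hence h1: "c * b < p" using d0 by simp
  have "c * (2*d) * (b - 1) < (p - s) * (2*d)"
  proof -
    have "0 \<le> (b+1)*(p-s)^2" using b0 by simp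
    moreover have "0 < (b-1)^2*(b+1)" using assms(1) by simp
    ultimately have "0 < (b+1)*(p-s)^2 + (b-1)^2*(b+1)" by linarith
    thus ?thesis unfolding cd by (simp add: d_def algebra_simps power2_eq_square)
  qed
  hence h2: "c * (b - 1) < p - s" using d0 by simp
  have "c * (2*d) < b * p * (2*d)"
  proof -
    have "0 \<le> (b*p-s)^2" by simp
    moreover have "0 \<le> (b^2-1)*p^2" using assms(1) by simp
    moreover have "0 < b^2 - 1" using assms(1) by simp
    ultimately have "0 < (b*p-s)^2 + (b^2-1)*p^2 + (b^2 - 1)" by linarith
    thus ?thesis unfolding cd by (simp add: d_def algebra_simps power2_eq_square)
  qed
  hence h3: "c < b * p" using d0 by simp
  have e2: "c < min (p / b) (min ((p - s) / (b - 1)) (b * p))"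
    using h1 h2 h3 assms(1) b0 by (simp add: field_simps)
  have amc: "\<alpha> - c *\<^sub>R \<beta> = (p - c*b, c - s)" by (simp add: ab)
  have A0: "p - c*b > 0" and AB: "p - c*b > s - c" using h1 h2 by (auto simp: algebra_simps)
  have cot: "dhym_cot \<alpha> \<beta> = c" using e1 by (simp add: dhym_cot_def)
  have kah: "inter \<alpha> \<gamma> \<ge> c * inter \<beta> \<gamma> \<and>
        inter \<alpha> \<alpha> - inter \<beta> \<beta> \<ge> c * (2 * inter \<alpha> \<beta>)" if "kahler \<gamma>" for \<gamma>
  proof
    obtain x y where g: "\<gamma> = (x, -y)" by (metis minus_minus prod.collapse)
    have xy: "x > y" "y > 0" using that by (auto simp: kahler_def g)
    have "(p - c*b) * x - (s - c) * y \<ge> 0"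
    proof (cases "s - c \<le> 0")
      case True thus ?thesis using xy A0
        by (smt (verit) mult_nonpos_nonneg mult_pos_pos)
    next
      case False
      have "(p - c*b) * x \<ge> (s - c) * x" using AB xy by simp
      moreover have "(s - c) * x \<ge> (s-c) * y" using False xy by simp
      ultimately show ?thesis by linarith
    qed
    thus "inter \<alpha> \<gamma> \<ge> c * inter \<beta> \<gamma>" by (simp add: ab g inter_def algebra_simps)
    show "inter \<alpha> \<alpha> - inter \<beta> \<beta> \<ge> c * (2 * inter \<alpha> \<beta>)"
      using cd iab by simp
  qed
  have curv: "inter \<alpha> Z - c * inter \<beta> Z \<ge> 0 \<and> (s > c \<longrightarrow> inter \<alpha> Z - c * inter \<beta> Z > 0)"
    if Z: "curve_class Z" and nE: "Z \<noteq> clsE" for Z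
  proof -
    obtain dd m :: nat where dm: "dd \<ge> 1" "m < dd \<or> (dd = 1 \<and> m = 1)" "Z = (real dd, - real m)"
      using Z nE unfolding curve_class_def by blast
    have eq: "inter \<alpha> Z - c * inter \<beta> Z = (p - c*b) * dd - (s - c) * m"
      by (simp add: ab dm(3) inter_def algebra_simps)
    have "(p - c*b) * dd - (s - c) * m > 0"
    proof (cases "s - c \<le> 0")
      case True thus ?thesis using A0 dm(1)
        by (smt (verit) mult_nonpos_nonneg mult_pos_pos of_nat_0_le_iff of_nat_1 of_nat_mono)
    next
      case False
      have "(p - c*b) * dd > (s - c) * dd" using AB dm(1) by simp
      moreover have "(s - c) * dd \<ge> (s-c) * m" using False dm(2) by auto
      ultimately show ?thesis by linarith
    qed
    thus ?thesis using eq by simp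
  qed
  have iE: "inter \<alpha> clsE = s" "inter \<beta> clsE = 1" by (simp_all add: ab clsE_def inter_def)
  have cE: "curve_class clsE" by (simp add: curve_class_def)
  have st: "dhym_stable \<alpha> \<beta> \<longleftrightarrow> s > c"
  proof
    assume "dhym_stable \<alpha> \<beta>"
    hence "inter \<alpha> clsE > c * inter \<beta> clsE" using cE cot unfolding dhym_stable_def by blast
    thus "s > c" using iE by simp
  next
    assume sc: "s > c"
    have "\<forall>Z. curve_class Z \<longrightarrow> inter \<alpha> Z > c * inter \<beta> Z"
    proof (intro allI impI)
      fix Z assume "curve_class Z"
      thus "inter \<alpha> Z > c * inter \<beta> Z" using curv[of Z] sc iE by (cases "Z = clsE") auto
    qed
    thus "dhym_stable \<alpha> \<beta>" using kah cot iab d0 by (simp add: dhym_stable_def)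
  qed
  have sst: "dhym_semistable \<alpha> \<beta> \<longleftrightarrow> s \<ge> c"
  proof
    assume "dhym_semistable \<alpha> \<beta>"
    hence "inter \<alpha> clsE \<ge> c * inter \<beta> clsE" using cE cot unfolding dhym_semistable_def by blast
    thus "s \<ge> c" using iE by simp
  next
    assume sc: "s \<ge> c"
    have "\<forall>Z. curve_class Z \<longrightarrow> inter \<alpha> Z \<ge> c * inter \<beta> Z"
    proof (intro allI impI)
      fix Z assume "curve_class Z"
      thus "inter \<alpha> Z \<ge> c * inter \<beta> Z" using curv[of Z] sc iE by (cases "Z = clsE") auto
    qed
    thus "dhym_semistable \<alpha> \<beta>" using kah cot iab d0 by (simp add: dhym_semistable_def)
  qed
  have bg: "big (\<alpha> - c *\<^sub>R \<beta>)" using A0 AB by (simp add: amc big_def)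
  have kk: "kahler (\<alpha> - c *\<^sub>R \<beta>) \<longleftrightarrow> s > c" using A0 AB by (auto simp: amc kahler_def)
  have nn: "nef (\<alpha> - c *\<^sub>R \<beta>) \<longleftrightarrow> s \<ge> c" using A0 AB by (auto simp: amc nef_def)
  show ?thesis using e1 e2 st sst bg kk nn by blast
qed

end
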